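(* Let $F$ be a finite field of characteristic $3$. Let $k\ge 0$ be an integer, $m=3k+1$, and $t$ an integer with $t^3\equiv 1\pmod m$ and $\gcd(m,t-1)=1$. Let $G=T_{3m}=\langle x,y\mid x^m=y^3=1,\ y^{-1}xy=x^t\rangle$ (of order $3m$), $FG$ its group algebra, and $H=\langle x\rangle$. Then $J(FG)\cap\Delta(G,H)=0$.
   Context: $J(FG)$ is the Jacobson radical of $FG$. $H=\langle x\rangle$ is a normal subgroup of $G$, and $\Delta(G,H)$ is the ideal of $FG$ generated by $\{h-1\mid h\in H\}$. *)

theory Defs
  imports "HOL-Algebra.Ideal" "HOL-Algebra.Generated_Groups"
begin

definition group_algebra :: "('g, 'b) monoid_scheme \<Rightarrow> ('g \<Rightarrow> 'f::field) ring" where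
  "group_algebra G =
     \<lparr>carrier = {f. \<forall>g. g \<notin> carrier G \<longrightarrow> f g = 0},
      mult = (\<lambda>f h g. if g \<in> carrier G
                      then (\<Sum>a\<in>carrier G. f a * h (inv\<^bsub>G\<^esub> a \<otimes>\<^bsub>G\<^esub> g)) else 0),
      one = (\<lambda>g. if g = \<one>\<^bsub>G\<^esub> then 1 else 0),
      zero = (\<lambda>g. 0),
      add = (\<lambda>f h g. f g + h g)\<rparr>"

definition grp_elt :: "('g, 'b) monoid_scheme \<Rightarrow> 'g \<Rightarrow> ('g \<Rightarrow> 'f::field)" where
  "grp_elt G h = (\<lambda>g. if g = h then 1 else 0)"

definition rel_aug_ideal :: "('g, 'b) monoid_scheme \<Rightarrow> 'g set \<Rightarrow> ('g \<Rightarrow> 'f::field) set" where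
  "rel_aug_ideal G H =
     genideal (group_algebra G) {(\<lambda>g. grp_elt G h g - grp_elt G \<one>\<^bsub>G\<^esub> g) | h. h \<in> H}"

definition left_ideal :: "('a, 'c) ring_scheme \<Rightarrow> 'a set \<Rightarrow> bool" where
  "left_ideal R I \<longleftrightarrow> additive_subgroup I R \<and>
     (\<forall>r\<in>carrier R. \<forall>a\<in>I. r \<otimes>\<^bsub>R\<^esub> a \<in> I)"

definition maximal_left_ideal :: "('a, 'c) ring_scheme \<Rightarrow> 'a set \<Rightarrow> bool" where
  "maximal_left_ideal R I \<longleftrightarrow> left_ideal R I \<and> I \<noteq> carrier R \<and>
     (\<forall>K. left_ideal R K \<longrightarrow> I \<subseteq> K \<longrightarrow> K = I \<or> K = carrier R)"

definition jacobson_radical :: "('a, 'c) ring_scheme \<Rightarrow> 'a set" where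
  "jacobson_radical R = carrier R \<inter> \<Inter>{I. maximal_left_ideal R I}"

end

theory Submission
  imports Defs "HOL-Library.Function_Algebras"
begin

definition cv :: "('g,'b) monoid_scheme \<Rightarrow> ('g \<Rightarrow> 'f::field) \<Rightarrow> ('g \<Rightarrow> 'f) \<Rightarrow> 'g \<Rightarrow> 'f" where
  "cv G f h = (\<lambda>g. if g \<in> carrier G then (\<Sum>a\<in>carrier G. f a * h (inv\<^bsub>G\<^esub> a \<otimes>\<^bsub>G\<^esub> g)) else 0)"

definition CR :: "('g,'b) monoid_scheme \<Rightarrow> ('g \<Rightarrow> 'f::field) set" where
  "CR G = {f. \<forall>g. g \<notin> carrier G \<longrightarrow> f g = 0}"

lemma GA_simps:
  "carrier (group_algebra G :: ('g \<Rightarrow> 'f::field) ring) = CR G"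
  "mult (group_algebra G :: ('g \<Rightarrow> 'f::field) ring) = cv G"
  "one (group_algebra G :: ('g \<Rightarrow> 'f::field) ring) = grp_elt G \<one>\<^bsub>G\<^esub>"
  "zero (group_algebra G :: ('g \<Rightarrow> 'f::field) ring) = 0"
  "add (group_algebra G :: ('g \<Rightarrow> 'f::field) ring) = (+)"
  by (auto simp: group_algebra_def CR_def cv_def grp_elt_def fun_eq_iff)

lemma cv_CR [simp]: "cv G f h \<in> CR G"
  by (simp add: cv_def CR_def)

lemma CR_add [simp]: "f \<in> CR G \<Longrightarrow> h \<in> CR G \<Longrightarrow> f + h \<in> CR G"
  by (simp add: CR_def)

lemma CR_uminus [simp]: "f \<in> CR G \<Longrightarrow> - f \<in> CR G"
  by (simp add: CR_def)

lemma CR_diff [simp]: "f \<in> CR G \<Longrightarrow> h \<in> CR G \<Longrightarrow> f - h \<in> CR G"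
  by (simp add: CR_def)

lemma CR_zero [simp]: "0 \<in> CR G"
  by (simp add: CR_def)

lemma CR_sum: "(\<And>i. i \<in> I \<Longrightarrow> f i \<in> CR G) \<Longrightarrow> (\<Sum>i\<in>I. f i) \<in> CR G"
  by (induction I rule: infinite_finite_induct) auto

lemma cv_add_left: "cv G (f + h) k = cv G f k + cv G h k"
  by (simp add: cv_def fun_eq_iff distrib_right sum.distrib)

lemma cv_add_right: "cv G k (f + h) = cv G k f + cv G k h"
  by (simp add: cv_def fun_eq_iff distrib_left sum.distrib)

lemma cv_diff_left: "cv G (f - h) k = cv G f k - cv G h k"
  by (simp add: cv_def fun_eq_iff left_diff_distrib sum_subtractf)

lemma cv_diff_right: "cv G k (f - h) = cv G k f - cv G k h"
  by (simp add: cv_def fun_eq_iff right_diff_distrib sum_subtractf)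

lemma cv_zero_left [simp]: "cv G 0 k = 0"
  by (simp add: cv_def fun_eq_iff)

lemma cv_zero_right [simp]: "cv G k 0 = 0"
  by (simp add: cv_def fun_eq_iff)

lemma cv_sum_left: "cv G (\<Sum>i\<in>I. f i) k = (\<Sum>i\<in>I. cv G (f i) k)"
proof (induction I rule: infinite_finite_induct)
  case (insert x F) then show ?case by (simp only: sum.insert[OF insert(1,2)] cv_add_left insert(3))
qed (simp_all add: cv_def fun_eq_iff)

lemma cv_sum_right: "cv G k (\<Sum>i\<in>I. f i) = (\<Sum>i\<in>I. cv G k (f i))"
proof (induction I rule: infinite_finite_induct)
  case (insert x F) then show ?case by (simp only: sum.insert[OF insert(1,2)] cv_add_right insert(3))
qed (simp_all add: cv_def fun_eq_iff)

lemma sum_fun_apply: "(\<Sum>i\<in>I. f i) x = (\<Sum>i\<in>I. f i x)"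
proof (induction I rule: infinite_finite_induct)
  case (insert a F) then show ?case by (simp only: sum.insert[OF insert(1,2)] plus_fun_apply insert(3))
qed (simp_all add: cv_def fun_eq_iff)

locale fgrp = group G for G :: "('g,'b) monoid_scheme" (structure) +
  assumes fin: "finite (carrier G)"

lemma (in group) bij_lmult: "b \<in> carrier G \<Longrightarrow> bij_betw (\<lambda>d. b \<otimes> d) (carrier G) (carrier G)"
  by (rule bij_betw_byWitness[where f'="\<lambda>a. inv b \<otimes> a"]) (auto simp: m_assoc[symmetric])

lemma (in group) cv_assoc: "cv G (cv G f g) h = cv G f (cv G g h)"
proof
  fix c
  show "cv G (cv G f g) h c = cv G f (cv G g h) c"
  proof (cases "c \<in> carrier G")
    case False then show ?thesis by (simp add: cv_def)
  next
    case c: True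
    have "cv G (cv G f g) h c = (\<Sum>a\<in>carrier G. \<Sum>b\<in>carrier G. f b * g (inv b \<otimes> a) * h (inv a \<otimes> c))"
      using c by (simp add: cv_def sum_distrib_right)
    also have "\<dots> = (\<Sum>b\<in>carrier G. \<Sum>a\<in>carrier G. f b * g (inv b \<otimes> a) * h (inv a \<otimes> c))"
      by (rule sum.swap)
    also have "\<dots> = (\<Sum>b\<in>carrier G. \<Sum>d\<in>carrier G. f b * g d * h (inv d \<otimes> (inv b \<otimes> c)))"
    proof (rule sum.cong[OF refl])
      fix b assume b: "b \<in> carrier G"
      have "(\<Sum>a\<in>carrier G. f b * g (inv b \<otimes> a) * h (inv a \<otimes> c))
          = (\<Sum>d\<in>carrier G. f b * g (inv b \<otimes> (b \<otimes> d)) * h (inv (b \<otimes> d) \<otimes> c))"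
        by (rule sum.reindex_bij_betw[OF bij_lmult[OF b], symmetric])
      also have "\<dots> = (\<Sum>d\<in>carrier G. f b * g d * h (inv d \<otimes> (inv b \<otimes> c)))"
        by (rule sum.cong[OF refl]) (simp add: b c m_assoc[symmetric] inv_mult_group)
      finally show "(\<Sum>a\<in>carrier G. f b * g (inv b \<otimes> a) * h (inv a \<otimes> c)) = \<dots>" .
    qed
    also have "\<dots> = cv G f (cv G g h) c"
      using c by (simp add: cv_def sum_distrib_left mult.assoc)
    finally show ?thesis .
  qed
qed

lemma (in fgrp) cv_elt_left:
  "a \<in> carrier G \<Longrightarrow> cv G (grp_elt G a) f = (\<lambda>g. if g \<in> carrier G then f (inv a \<otimes> g) else 0)"
  by (simp add: cv_def grp_elt_def fun_eq_iff if_distrib[where f="\<lambda>x. x * _"] fin cong: if_cong)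

lemma (in fgrp) cv_elt_right:
  assumes b: "b \<in> carrier G"
  shows "cv G f (grp_elt G b) = (\<lambda>g. if g \<in> carrier G then f (g \<otimes> inv b) else 0)"
proof
  fix g show "cv G f (grp_elt G b) g = (if g \<in> carrier G then f (g \<otimes> inv b) else 0)"
  proof (cases "g \<in> carrier G")
    case True
    have "cv G f (grp_elt G b) g = (\<Sum>a\<in>carrier G. if a = g \<otimes> inv b then f a else 0)"
      unfolding cv_def grp_elt_def using True b
      by (auto intro!: sum.cong simp: inv_mult_group m_assoc[symmetric]
          dest: sym intro: inv_equality)
         (metis inv_mult_group group.inv_inv is_group m_closed inv_closed r_inv r_one m_assoc
             inv_solve_left, metis m_assoc inv_closed l_inv r_one)
    also have "\<dots> = f (g \<otimes> inv b)" using True b fin by simp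
    finally show ?thesis using True by simp
  qed (simp add: cv_def)
qed

context fgrp begin

lemma elt_CR [simp]: "a \<in> carrier G \<Longrightarrow> (grp_elt G a :: 'g \<Rightarrow> 'f::field) \<in> CR G"
  by (auto simp: CR_def grp_elt_def)

lemma cv_elt_elt: "a \<in> carrier G \<Longrightarrow> b \<in> carrier G \<Longrightarrow>
   cv G (grp_elt G a) (grp_elt G b) = (grp_elt G (a \<otimes> b) :: 'g \<Rightarrow> 'f::field)"
proof -
  assume a: "a \<in> carrier G" and b: "b \<in> carrier G"
  have "\<And>g. g \<in> carrier G \<Longrightarrow> (inv a \<otimes> g = b) = (g = a \<otimes> b)"
    using a b by (metis inv_solve_left m_closed inv_closed)
  then show ?thesis using a b
    by (simp add: cv_elt_left) (auto simp: grp_elt_def fun_eq_iff)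
qed

lemma cv_one_left [simp]: "f \<in> CR G \<Longrightarrow> cv G (grp_elt G \<one>) f = f"
  by (auto simp: cv_elt_left CR_def fun_eq_iff)

lemma cv_one_right [simp]: "f \<in> CR G \<Longrightarrow> cv G f (grp_elt G \<one>) = f"
  by (auto simp: cv_elt_right CR_def fun_eq_iff)

lemma finite_CR: "finite (CR G :: ('g \<Rightarrow> 'f::{field,finite}) set)"
proof -
  have "CR G = {f :: 'g \<Rightarrow> 'f. \<forall>x. (x \<in> carrier G \<longrightarrow> f x \<in> UNIV) \<and> (x \<notin> carrier G \<longrightarrow> f x = 0)}"
    by (auto simp: CR_def)
  then show ?thesis using finite_set_of_finite_funs[OF fin, of "UNIV :: 'f set" 0] by simp
qed

lemma GA_ring: "ring (group_algebra G :: ('g \<Rightarrow> 'f::field) ring)"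
proof (rule ringI)
  show "abelian_group (group_algebra G :: ('g \<Rightarrow> 'f::field) ring)"
  proof (rule abelian_groupI, simp_all only: GA_simps)
    fix x :: "'g \<Rightarrow> 'f" assume "x \<in> CR G"
    then show "\<exists>y\<in>CR G. y + x = 0" by (intro bexI[of _ "- x"]) auto
  qed (auto simp: add_ac)
  show "monoid (group_algebra G :: ('g \<Rightarrow> 'f::field) ring)"
    by (rule monoidI) (simp_all add: GA_simps cv_assoc)
qed (simp_all add: GA_simps cv_add_left cv_add_right)

lemma GA_a_inv: "f \<in> CR G \<Longrightarrow> a_inv (group_algebra G :: ('g \<Rightarrow> 'f::field) ring) f = - f"
proof -
  assume f: "f \<in> CR G"
  interpret R: ring "group_algebra G :: ('g \<Rightarrow> 'f::field) ring" by (rule GA_ring)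
  show ?thesis by (rule R.minus_equality) (use f in \<open>simp_all add: GA_simps\<close>)
qed

end


fun pw :: "('g,'b) monoid_scheme \<Rightarrow> ('g \<Rightarrow> 'f::field) \<Rightarrow> nat \<Rightarrow> 'g \<Rightarrow> 'f" where
  "pw G u 0 = grp_elt G \<one>\<^bsub>G\<^esub>"
| "pw G u (Suc n) = cv G (pw G u n) u"

context fgrp begin

lemma pw_CR [simp]: "pw G u n \<in> CR G"
  by (cases n) auto

lemma pw_add: "u \<in> CR G \<Longrightarrow> pw G u (a + b) = cv G (pw G u a) (pw G u b)"
  by (induction b) (auto simp: cv_assoc)

lemma pw_mult: "u \<in> CR G \<Longrightarrow> pw G u (a * b) = pw G (pw G u a) b"
proof (induction b)
  case (Suc b)
  have "pw G u (a * Suc b) = pw G u (a * b + a)" by (simp add: algebra_simps)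
  also have "\<dots> = cv G (pw G u (a * b)) (pw G u a)" using Suc by (simp add: pw_add)
  finally show ?case using Suc by simp
qed simp

lemma left_ideal_subset: "left_ideal (group_algebra G :: ('g \<Rightarrow> 'f::field) ring) K \<Longrightarrow> K \<subseteq> CR G"
  unfolding left_ideal_def using additive_subgroup.a_subset by (fastforce simp: GA_simps)

lemma left_ideal_add: "left_ideal (group_algebra G :: ('g \<Rightarrow> 'f::field) ring) K \<Longrightarrow> a \<in> K \<Longrightarrow> b \<in> K \<Longrightarrow> a + b \<in> K"
  unfolding left_ideal_def using additive_subgroup.a_closed by (fastforce simp: GA_simps)

lemma left_ideal_mult: "left_ideal (group_algebra G :: ('g \<Rightarrow> 'f::field) ring) K \<Longrightarrow> r \<in> CR G \<Longrightarrow> a \<in> K \<Longrightarrow> cv G r a \<in> K"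
  unfolding left_ideal_def by (simp add: GA_simps)

lemma principal_left_ideal:
  assumes w: "w \<in> CR G"
  shows "left_ideal (group_algebra G :: ('g \<Rightarrow> 'f::field) ring) {cv G s w | s. s \<in> CR G}"
proof -
  let ?R = "group_algebra G :: ('g \<Rightarrow> 'f::field) ring"
  let ?I = "{cv G s w | s. s \<in> CR G}"
  have "subgroup ?I (add_monoid ?R)"
  proof (rule subgroup.intro)
    show "?I \<subseteq> carrier (add_monoid ?R)" by (auto simp: GA_simps)
    show "\<And>a b. a \<in> ?I \<Longrightarrow> b \<in> ?I \<Longrightarrow> a \<otimes>\<^bsub>add_monoid ?R\<^esub> b \<in> ?I"
    proof -
      fix a b assume "a \<in> ?I" "b \<in> ?I"
      then obtain s s' where "s \<in> CR G" "s' \<in> CR G" "a = cv G s w" "b = cv G s' w" by auto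
      then have "a \<otimes>\<^bsub>add_monoid ?R\<^esub> b = cv G (s + s') w \<and> s + s' \<in> CR G"
        by (simp add: GA_simps cv_add_left)
      then show "a \<otimes>\<^bsub>add_monoid ?R\<^esub> b \<in> ?I" by blast
    qed
    show "\<one>\<^bsub>add_monoid ?R\<^esub> \<in> ?I"
      by (auto simp: GA_simps intro!: exI[of _ 0] simp del: cv_zero_left) (simp add: cv_def fun_eq_iff)
    show "\<And>a. a \<in> ?I \<Longrightarrow> inv\<^bsub>add_monoid ?R\<^esub> a \<in> ?I"
    proof -
      fix a assume "a \<in> ?I"
      then obtain s where s: "s \<in> CR G" "a = cv G s w" by auto
      have "inv\<^bsub>add_monoid ?R\<^esub> a = - a" using GA_a_inv[of a] s by (simp add: a_inv_def)
      also have "\<dots> = cv G (- s) w" using s cv_diff_left[of G 0 s w] by simp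
      finally show "inv\<^bsub>add_monoid ?R\<^esub> a \<in> ?I" using s by auto
    qed
  qed
  moreover have "\<forall>r\<in>carrier ?R. \<forall>a\<in>?I. r \<otimes>\<^bsub>?R\<^esub> a \<in> ?I"
  proof (intro ballI)
    fix r a assume r: "r \<in> carrier ?R" and "a \<in> ?I"
    then obtain s where s: "s \<in> CR G" "a = cv G s w" by auto
    then have "r \<otimes>\<^bsub>?R\<^esub> a = cv G (cv G r s) w" by (simp add: GA_simps cv_assoc)
    then show "r \<otimes>\<^bsub>?R\<^esub> a \<in> ?I" by auto
  qed
  ultimately show ?thesis
    unfolding left_ideal_def by (simp add: additive_subgroup_def)
qed

lemma exists_maximal:
  assumes "left_ideal (group_algebra G :: ('g \<Rightarrow> 'f::{field,finite}) ring) I" "I \<noteq> CR G"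
  shows "\<exists>M. maximal_left_ideal (group_algebra G :: ('g \<Rightarrow> 'f) ring) M \<and> I \<subseteq> M"
proof -
  let ?R = "group_algebra G :: ('g \<Rightarrow> 'f) ring"
  let ?L = "{K. left_ideal ?R K \<and> K \<noteq> CR G \<and> I \<subseteq> K}"
  have "?L \<subseteq> Pow (CR G)" using left_ideal_subset by auto
  then have fL: "finite ?L" using finite_CR by (meson finite_Pow_iff finite_subset)
  have "I \<in> ?L" using assms by simp
  then have ne: "?L \<noteq> {}" by blast
  have "\<exists>K\<in>?L. \<forall>b\<in>?L. K \<subseteq> b \<longrightarrow> K = b" by (rule finite_has_maximal[OF fL ne])
  then obtain K where K1: "K \<in> ?L" and K2: "\<forall>b\<in>?L. K \<subseteq> b \<longrightarrow> K = b" by (elim bexE)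
  have "maximal_left_ideal ?R K"
    unfolding maximal_left_ideal_def
  proof (intro conjI allI impI)
    show "left_ideal ?R K" using K1 by simp
    show "K \<noteq> carrier ?R" using K1 by (simp add: GA_simps)
    fix K' assume "left_ideal ?R K'" "K \<subseteq> K'"
    then show "K' = K \<or> K' = carrier ?R" using K1 K2 by (auto simp: GA_simps)
  qed
  then show ?thesis using K1 by blast
qed

end

context fgrp begin
lemma jac_nil:
  fixes z :: "'g \<Rightarrow> 'f::{field,finite}"
  assumes zJ: "z \<in> jacobson_radical (group_algebra G :: ('g \<Rightarrow> 'f) ring)"
  shows "\<exists>n. pw G z n = 0"
proof -
  let ?R = "group_algebra G :: ('g \<Rightarrow> 'f) ring"
  have z: "z \<in> CR G" using zJ by (simp add: jacobson_radical_def GA_simps)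
  have zM: "\<And>M. maximal_left_ideal ?R M \<Longrightarrow> z \<in> M" using zJ by (auto simp: jacobson_radical_def)
  have "\<not> inj (pw G z)"
  proof
    assume "inj (pw G z)"
    moreover have "finite (range (pw G z))" using finite_CR by (rule finite_subset[rotated]) auto
    ultimately show False using finite_imageD by fastforce
  qed
  then obtain a b where ab: "a \<noteq> b" "pw G z a = pw G z b" unfolding inj_def by blast
  have "\<exists>a p. p > 0 \<and> pw G z a = pw G z (a + p)"
  proof (cases "a < b")
    case True then show ?thesis using ab by (intro exI[of _ a] exI[of _ "b - a"]) simp
  next
    case False then have "b < a" using ab by simp
    then show ?thesis using ab by (intro exI[of _ b] exI[of _ "a - b"]) simp
  qed
  then obtain a p where ap: "p > 0" "pw G z a = pw G z (a + p)" by blast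
  have per1: "pw G z (i + p) = pw G z i" if "i \<ge> a" for i
  proof -
    have "pw G z (i + p) = pw G z ((i - a) + (a + p))" using that by (simp add: algebra_simps)
    also have "\<dots> = cv G (pw G z (i - a)) (pw G z a)" using z ap by (simp add: pw_add)
    also have "\<dots> = pw G z i" using z that by (simp add: pw_add[symmetric])
    finally show ?thesis .
  qed
  have per: "pw G z (i + q * p) = pw G z i" if "i \<ge> a" for i q
    using that
  proof (induction q)
    case (Suc q)
    have "pw G z (i + Suc q * p) = pw G z ((i + q * p) + p)" by (simp add: algebra_simps)
    also have "\<dots> = pw G z (i + q * p)" using Suc by (intro per1) simp
    finally show ?case using Suc by simp
  qed simp
  define c where "c = (a + 1) * p"
  have "a \<le> a * p" using ap by simp
  then have c1: "c \<ge> 1" "c \<ge> a" using ap unfolding c_def by (simp_all, linarith)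
  define e where "e = pw G z c"
  have eCR: "e \<in> CR G" by (simp add: e_def)
  have idem: "cv G e e = e"
  proof -
    have "cv G e e = pw G z (c + c)" unfolding e_def by (rule pw_add[symmetric, OF z])
    also have "\<dots> = pw G z (c + (a + 1) * p)" by (simp add: c_def)
    also have "\<dots> = e" unfolding e_def by (rule per[OF c1(2)])
    finally show ?thesis .
  qed
  have eM: "e \<in> M" if "maximal_left_ideal ?R M" for M
  proof -
    obtain c' where "c = Suc c'" using c1 by (cases c) auto
    then have ee: "e = cv G (pw G z c') z" by (simp add: e_def)
    have LM: "left_ideal ?R M" using that by (simp add: maximal_left_ideal_def)
    have "cv G (pw G z c') z \<in> M" by (rule left_ideal_mult[OF LM pw_CR zM[OF that]])
    then show ?thesis by (simp only: ee)
  qed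
  have "e = 0"
  proof (rule ccontr)
    assume ne: "e \<noteq> 0"
    let ?w = "grp_elt G \<one> - e"
    let ?I = "{cv G s ?w | s. s \<in> CR G}"
    have wCR: "?w \<in> CR G" using eCR by simp
    have LI: "left_ideal ?R ?I" by (rule principal_left_ideal[OF wCR])
    have "grp_elt G \<one> \<notin> ?I"
    proof
      assume "grp_elt G \<one> \<in> ?I"
      then obtain s where s: "s \<in> CR G" "cv G s ?w = grp_elt G \<one>" by auto
      have "e = cv G (cv G s ?w) e" using s eCR by simp
      also have "\<dots> = cv G s (cv G ?w e)" by (simp add: cv_assoc)
      also have "\<dots> = 0" using eCR idem by (simp add: cv_diff_left)
      finally show False using ne by simp
    qed
    then have "?I \<noteq> CR G" by auto
    then obtain M where M: "maximal_left_ideal ?R M" "?I \<subseteq> M" using exists_maximal[OF LI] by blast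
    have LM: "left_ideal ?R M" using M by (simp add: maximal_left_ideal_def)
    have "grp_elt G \<one> \<in> CR G" by simp
    then have "cv G (grp_elt G \<one>) ?w \<in> ?I" by blast
    then have "?w \<in> ?I" using wCR by simp
    then have "?w \<in> M" using M(2) by blast
    then have "?w + e \<in> M" using left_ideal_add[OF LM] eM[OF M(1)] by blast
    then have one: "grp_elt G \<one> \<in> M" by simp
    have "CR G \<subseteq> M"
    proof
      fix r :: "'g \<Rightarrow> 'f" assume "r \<in> CR G"
      then have "cv G r (grp_elt G \<one>) \<in> M" using left_ideal_mult[OF LM _ one] by blast
      then show "r \<in> M" using \<open>r \<in> CR G\<close> by simp
    qed
    then have "M = CR G" using left_ideal_subset[OF LM] by auto
    then show False using M(1) by (simp add: maximal_left_ideal_def GA_simps)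
  qed
  then show ?thesis unfolding e_def by blast
qed

end

locale T3m = fgrp G for G :: "('g,'b) monoid_scheme" (structure) +
  fixes x y :: 'g and m k :: nat and t :: int
  assumes mk: "m = 3 * k + 1" and gcd1: "gcd (int m) (t - 1) = 1"
    and x: "x \<in> carrier G" and y: "y \<in> carrier G" and gen: "generate G {x, y} = carrier G"
    and xm: "x [^] m = \<one>" and y3: "y [^] (3::nat) = \<one>" and rel: "inv y \<otimes> x \<otimes> y = x [^] t"
    and ordG: "order G = 3 * m"
begin

definition "HH = generate G {x}"

lemma cancel1 [simp]: "a \<in> carrier G \<Longrightarrow> b \<in> carrier G \<Longrightarrow> a \<otimes> (inv a \<otimes> b) = b"
  by (simp add: m_assoc[symmetric])

lemma cancel2 [simp]: "a \<in> carrier G \<Longrightarrow> b \<in> carrier G \<Longrightarrow> inv a \<otimes> (a \<otimes> b) = b"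
  by (simp add: m_assoc[symmetric])

lemma HH_def2: "HH = {x [^] (i::int) | i. True}"
  unfolding HH_def using generate_pow[OF x] by simp

lemma HH_sub: "subgroup HH G"
  unfolding HH_def by (rule generate_is_subgroup) (simp add: x)

lemma HH_carr: "c \<in> HH \<Longrightarrow> c \<in> carrier G"
  using subgroup.subset[OF HH_sub] by blast

lemma HH_mult: "c \<in> HH \<Longrightarrow> d \<in> HH \<Longrightarrow> c \<otimes> d \<in> HH"
  using subgroup.m_closed[OF HH_sub] by blast

lemma HH_inv: "c \<in> HH \<Longrightarrow> inv c \<in> HH"
  using subgroup.m_inv_closed[OF HH_sub] by blast

lemma HH_one: "\<one> \<in> HH"
  using subgroup.one_closed[OF HH_sub] by blast

lemma x_HH: "x \<in> HH"
  unfolding HH_def by (rule generate.incl) simp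

lemma y3': "y \<otimes> y \<otimes> y = \<one>"
  using y3 y by (simp add: numeral_3_eq_3)

lemma y3'': "b \<in> carrier G \<Longrightarrow> y \<otimes> (y \<otimes> (y \<otimes> b)) = b"
  using y3' y by (simp add: m_assoc[symmetric])

lemma y3''': "y \<otimes> (y \<otimes> y) = \<one>"
  using y3' y by (simp add: m_assoc)

lemma inv_y: "inv y = y \<otimes> y"
  using y3' y by (metis inv_char m_closed m_assoc)

lemma HH_pow_m: "c \<in> HH \<Longrightarrow> c [^] m = \<one>"
proof -
  assume "c \<in> HH"
  then obtain i where c: "c = x [^] (i::int)" by (auto simp: HH_def2)
  have "c [^] m = c [^] (int m)" by (simp add: int_pow_int)
  also have "\<dots> = x [^] (int m * i)" using x by (simp add: c int_pow_pow mult.commute)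
  also have "\<dots> = (x [^] (int m)) [^] i" using x by (simp add: int_pow_pow)
  also have "\<dots> = \<one>" by (simp add: int_pow_int xm)
  finally show ?thesis .
qed

lemma HH_comm: "c \<in> HH \<Longrightarrow> d \<in> HH \<Longrightarrow> c \<otimes> d = d \<otimes> c"
proof -
  assume "c \<in> HH" "d \<in> HH"
  then obtain i j where "c = x [^] (i::int)" "d = x [^] (j::int)" by (auto simp: HH_def2)
  then show ?thesis using x by (simp add: int_pow_mult[symmetric] add.commute)
qed

lemma conj_hom: "(\<lambda>g. inv y \<otimes> g \<otimes> y) \<in> hom G G"
  unfolding hom_def using y by (auto simp: m_assoc)

lemma conj_y_pow: "c \<in> HH \<Longrightarrow> inv y \<otimes> c \<otimes> y = c [^] t"
proof -
  assume "c \<in> HH"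
  then obtain i where c: "c = x [^] (i::int)" by (auto simp: HH_def2)
  have "inv y \<otimes> c \<otimes> y = (inv y \<otimes> x \<otimes> y) [^] i"
    unfolding c using hom_int_pow[OF conj_hom x is_group is_group, of i] by simp
  also have "\<dots> = x [^] (t * i)" using x by (simp add: rel int_pow_pow)
  also have "\<dots> = c [^] t" using x by (simp add: c int_pow_pow mult.commute)
  finally show ?thesis .
qed

lemma conj_inv_y: "c \<in> HH \<Longrightarrow> inv y \<otimes> c \<otimes> y \<in> HH"
proof -
  assume c: "c \<in> HH"
  then have "c [^] t \<in> HH"
    using subgroup_int_pow_closed[OF HH_sub] by blast
  then show ?thesis using conj_y_pow[OF c] by simp
qed

lemma conj_y: "c \<in> HH \<Longrightarrow> y \<otimes> c \<otimes> inv y \<in> HH"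
proof -
  assume c: "c \<in> HH"
  have cc: "c \<in> carrier G" by (rule HH_carr[OF c])
  have "y \<otimes> c \<otimes> inv y = inv y \<otimes> (inv y \<otimes> c \<otimes> y) \<otimes> y"
    using y cc by (simp add: inv_y m_assoc y3'')
  then show ?thesis using conj_inv_y[OF conj_inv_y[OF c]] by simp
qed

lemma fpf: "c \<in> HH \<Longrightarrow> c \<otimes> y = y \<otimes> c \<Longrightarrow> c = \<one>"
proof -
  assume c: "c \<in> HH" and cy: "c \<otimes> y = y \<otimes> c"
  have cc: "c \<in> carrier G" by (rule HH_carr[OF c])
  have "inv y \<otimes> c \<otimes> y = c" using cy cc y by (simp add: m_assoc)
  then have ct: "c [^] t = c" using conj_y_pow[OF c] by simp
  have c1: "c [^] (t - 1) = \<one>" using cc by (simp add: int_pow_diff ct)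
  have cm: "c [^] (int m) = \<one>" by (simp add: int_pow_int HH_pow_m[OF c])
  obtain u v where uv: "u * int m + v * (t - 1) = 1" using bezout_int[of "int m" "t - 1"] gcd1 by auto
  have "c = c [^] (u * int m + v * (t - 1))" using cc by (simp add: uv)
  also have "\<dots> = (c [^] (int m)) [^] u \<otimes> (c [^] (t - 1)) [^] v"
    using cc by (simp add: int_pow_mult int_pow_pow mult.commute)
  also have "\<dots> = \<one>" by (simp add: cm c1)
  finally show ?thesis .
qed

lemma fpf2: "c \<in> HH \<Longrightarrow> c \<otimes> (y \<otimes> y) = (y \<otimes> y) \<otimes> c \<Longrightarrow> c = \<one>"
proof -
  assume c: "c \<in> HH" and cy: "c \<otimes> (y \<otimes> y) = (y \<otimes> y) \<otimes> c"
  have cc: "c \<in> carrier G" by (rule HH_carr[OF c])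
  have "c \<otimes> inv y = inv y \<otimes> c" using cy by (simp add: inv_y)
  then have "c \<otimes> y = y \<otimes> c" using cc y
    by (metis inv_closed inv_inv m_closed m_assoc inv_solve_left inv_solve_right)
  then show ?thesis by (rule fpf[OF c])
qed


definition "YY = {\<one>, y, y \<otimes> y}"

lemma YY_carr: "a \<in> YY \<Longrightarrow> a \<in> carrier G"
  using y by (auto simp: YY_def)

lemma YY_mult: "a \<in> YY \<Longrightarrow> b \<in> YY \<Longrightarrow> a \<otimes> b \<in> YY"
  using y y3' y3'' by (auto simp: YY_def m_assoc)

lemma conj_YY: "a \<in> YY \<Longrightarrow> c \<in> HH \<Longrightarrow> a \<otimes> c \<otimes> inv a \<in> HH \<and> inv a \<otimes> c \<otimes> a \<in> HH"
proof -
  assume a: "a \<in> YY" and c: "c \<in> HH"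
  have cc: "c \<in> carrier G" by (rule HH_carr[OF c])
  have e1: "y \<otimes> y \<otimes> c \<otimes> inv (y \<otimes> y) = y \<otimes> (y \<otimes> c \<otimes> inv y) \<otimes> inv y"
    using y cc by (simp add: m_assoc inv_mult_group)
  have e2: "inv (y \<otimes> y) \<otimes> c \<otimes> (y \<otimes> y) = inv y \<otimes> (inv y \<otimes> c \<otimes> y) \<otimes> y"
    using y cc by (simp add: m_assoc inv_mult_group)
  show ?thesis using a c cc conj_y conj_inv_y e1 e2
    by (auto simp: YY_def)
qed

lemma decomp: "g \<in> carrier G \<Longrightarrow> \<exists>h\<in>HH. \<exists>a\<in>YY. g = h \<otimes> a"
proof -
  assume "g \<in> carrier G"
  then have "g \<in> generate G {x, y}" using gen by simp
  then show ?thesis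
  proof (induction rule: generate.induct)
    case one show ?case using HH_one by (auto simp: YY_def intro!: bexI[of _ "\<one>"])
  next
    case (incl h)
    then show ?case
    proof
      assume "h = x" then show ?case using x_HH x by (auto simp: YY_def intro!: bexI[of _ x])
    next
      assume "h \<in> {y}" then show ?case using HH_one y by (auto simp: YY_def intro!: bexI[of _ "\<one>"])
    qed
  next
    case (inv h)
    then show ?case
    proof
      assume "h = x" then show ?case using HH_inv[OF x_HH] x by (auto simp: YY_def intro!: bexI[of _ "inv x"])
    next
      assume "h \<in> {y}" then show ?case using HH_one y inv_y by (auto simp: YY_def intro!: bexI[of _ "\<one>"])
    qed
  next
    case (eng g1 g2)
    then obtain h1 a h2 b where h: "h1 \<in> HH" "a \<in> YY" "h2 \<in> HH" "b \<in> YY" "g1 = h1 \<otimes> a" "g2 = h2 \<otimes> b"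
      by blast
    have c: "h1 \<in> carrier G" "a \<in> carrier G" "h2 \<in> carrier G" "b \<in> carrier G"
      using h HH_carr YY_carr by auto
    have "g1 \<otimes> g2 = (h1 \<otimes> (a \<otimes> h2 \<otimes> inv a)) \<otimes> (a \<otimes> b)"
      using c by (simp add: h m_assoc)
    moreover have "h1 \<otimes> (a \<otimes> h2 \<otimes> inv a) \<in> HH" using conj_YY[OF h(2,3)] HH_mult[OF h(1)] by blast
    moreover have "a \<otimes> b \<in> YY" using YY_mult h by blast
    ultimately show ?case by blast
  qed
qed

lemma finite_HH: "finite HH"
  using fin HH_carr by (meson finite_subset subsetI)

lemma card_HH_le: "card HH \<le> m"
proof -
  have m0: "m > 0" using mk by simp
  have "HH \<subseteq> (\<lambda>i. x [^] i) ` {0..<int m}"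
  proof
    fix c assume "c \<in> HH"
    then obtain i where c: "c = x [^] (i::int)" by (auto simp: HH_def2)
    have "x [^] i = x [^] (int m * (i div int m) + i mod int m)" by simp
    also have "\<dots> = x [^] (int m * (i div int m)) \<otimes> x [^] (i mod int m)"
      by (rule int_pow_mult[OF x])
    also have "\<dots> = (x [^] int m) [^] (i div int m) \<otimes> x [^] (i mod int m)"
      using x by (simp add: int_pow_pow)
    also have "\<dots> = x [^] (i mod int m)" using x by (simp add: int_pow_int xm)
    finally have "c = x [^] (i mod int m)" using c by simp
    moreover have "i mod int m \<in> {0..<int m}" using m0 by simp
    ultimately show "c \<in> (\<lambda>i. x [^] i) ` {0..<int m}" by blast
  qed
  then have "card HH \<le> card ((\<lambda>i. x [^] i) ` {0..<int m})" by (intro card_mono) auto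
  also have "\<dots> \<le> card {0..<int m}" by (rule card_image_le) simp
  finally show ?thesis by simp
qed

lemma card_HH: "card HH = m"
proof -
  have "carrier G \<subseteq> (\<lambda>h. h \<otimes> \<one>) ` HH \<union> ((\<lambda>h. h \<otimes> y) ` HH \<union> (\<lambda>h. h \<otimes> (y \<otimes> y)) ` HH)"
  proof
    fix g assume "g \<in> carrier G"
    then obtain h a where "h \<in> HH" "a \<in> YY" "g = h \<otimes> a" using decomp by blast
    then show "g \<in> (\<lambda>h. h \<otimes> \<one>) ` HH \<union> ((\<lambda>h. h \<otimes> y) ` HH \<union> (\<lambda>h. h \<otimes> (y \<otimes> y)) ` HH)"
      unfolding YY_def by blast
  qed
  then have "card (carrier G) \<le> card ((\<lambda>h. h \<otimes> \<one>) ` HH \<union> ((\<lambda>h. h \<otimes> y) ` HH \<union> (\<lambda>h. h \<otimes> (y \<otimes> y)) ` HH))"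
    using finite_HH by (intro card_mono) auto
  also have "\<dots> \<le> card HH + (card HH + card HH)"
    using finite_HH card_image_le card_Un_le by (meson add_mono order_trans)
  finally have "3 * m \<le> 3 * card HH" using ordG by (simp add: order_def)
  then show ?thesis using card_HH_le by simp
qed

lemma y_notin: "y \<notin> HH"
proof
  assume "y \<in> HH"
  then have "generate G {x, y} \<subseteq> HH" using x_HH by (intro generate_subgroup_incl HH_sub) auto
  then have "carrier G \<subseteq> HH" using gen by simp
  then have "card (carrier G) \<le> card HH" using finite_HH by (rule card_mono[rotated])
  then show False using card_HH ordG mk by (simp add: order_def)
qed

lemma not2: "a \<in> HH \<Longrightarrow> a \<otimes> y \<in> HH \<Longrightarrow> False"
proof -
  assume a: "a \<in> HH" and ay: "a \<otimes> y \<in> HH"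
  have "inv a \<otimes> (a \<otimes> y) \<in> HH" using HH_mult[OF HH_inv[OF a] ay] .
  then show False using y_notin y HH_carr[OF a] by simp
qed

lemma not2': "a \<in> HH \<Longrightarrow> a \<otimes> inv y \<in> HH \<Longrightarrow> False"
proof -
  assume a: "a \<in> HH" and ay: "a \<otimes> inv y \<in> HH"
  have "inv a \<otimes> (a \<otimes> inv y) \<in> HH" using HH_mult[OF HH_inv[OF a] ay] .
  then have "inv y \<in> HH" using y HH_carr[OF a] by simp
  then show False using y_notin y HH_inv by fastforce
qed

lemma one_of3:
  assumes g: "g \<in> carrier G"
  shows "(g \<in> HH \<and> g \<otimes> inv y \<notin> HH \<and> g \<otimes> y \<notin> HH) \<or>
         (g \<notin> HH \<and> g \<otimes> inv y \<in> HH \<and> g \<otimes> y \<notin> HH) \<or>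
         (g \<notin> HH \<and> g \<otimes> inv y \<notin> HH \<and> g \<otimes> y \<in> HH)"
proof -
  have e: "g \<otimes> inv y \<otimes> inv y = g \<otimes> y" using g y by (simp add: m_assoc inv_y y3'')
  have p1: "\<not> (g \<in> HH \<and> g \<otimes> inv y \<in> HH)" using not2' by blast
  have p2: "\<not> (g \<in> HH \<and> g \<otimes> y \<in> HH)" using not2 by blast
  have p3: "\<not> (g \<otimes> inv y \<in> HH \<and> g \<otimes> y \<in> HH)" using not2'[of "g \<otimes> inv y"] e by auto
  obtain h a where ha: "h \<in> HH" "a \<in> YY" "g = h \<otimes> a" using decomp[OF g] by blast
  have hc: "h \<in> carrier G" using HH_carr[OF ha(1)] .
  have "g \<in> HH \<or> g \<otimes> inv y \<in> HH \<or> g \<otimes> y \<in> HH"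
    using ha hc y y3'' y3''' by (auto simp: YY_def m_assoc)
  then show ?thesis using p1 p2 p3 by blast
qed

lemma normal1: "g \<in> carrier G \<Longrightarrow> c \<in> HH \<Longrightarrow> inv g \<otimes> c \<otimes> g \<in> HH"
proof -
  assume g: "g \<in> carrier G" and c: "c \<in> HH"
  obtain h a where ha: "h \<in> HH" "a \<in> YY" "g = h \<otimes> a" using decomp[OF g] by blast
  have cc: "h \<in> carrier G" "a \<in> carrier G" "c \<in> carrier G" using ha HH_carr YY_carr c by auto
  have "inv g \<otimes> c \<otimes> g = inv a \<otimes> (inv h \<otimes> c \<otimes> h) \<otimes> a"
    using cc by (simp add: ha inv_mult_group m_assoc)
  moreover have "inv h \<otimes> c \<otimes> h \<in> HH" using HH_mult[OF HH_mult[OF HH_inv[OF ha(1)] c] ha(1)] .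
  ultimately show ?thesis using conj_YY[OF ha(2)] by simp
qed

lemma normal2: "g \<in> carrier G \<Longrightarrow> c \<in> HH \<Longrightarrow> g \<otimes> c \<otimes> inv g \<in> HH"
  using normal1[of "inv g" c] by simp

lemma rho_inj:
  assumes w: "w = y \<or> w = y \<otimes> y"
  shows "inj_on (\<lambda>h. h \<otimes> w \<otimes> inv h \<otimes> inv w) HH"
proof
  have wc: "w \<in> carrier G" using w y by auto
  fix h1 h2 assume h: "h1 \<in> HH" "h2 \<in> HH" and eq: "h1 \<otimes> w \<otimes> inv h1 \<otimes> inv w = h2 \<otimes> w \<otimes> inv h2 \<otimes> inv w"
  have hc: "h1 \<in> carrier G" "h2 \<in> carrier G" using h HH_carr by auto
  let ?c = "inv h2 \<otimes> h1"
  have "h1 \<otimes> w \<otimes> inv h1 = h2 \<otimes> w \<otimes> inv h2" using eq hc wc by simp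
  then have "inv h2 \<otimes> (h1 \<otimes> w \<otimes> inv h1) \<otimes> h1 = inv h2 \<otimes> (h2 \<otimes> w \<otimes> inv h2) \<otimes> h1" by simp
  then have comm: "?c \<otimes> w = w \<otimes> ?c" using hc wc by (simp add: m_assoc)
  have cH: "?c \<in> HH" using HH_mult[OF HH_inv[OF h(2)] h(1)] .
  have "?c = \<one>" using w fpf[OF cH] fpf2[OF cH] comm by blast
  then show "h1 = h2" using hc by (metis inv_equality inv_inv inv_closed)
qed

lemma rho_bij:
  assumes w: "w = y \<or> w = y \<otimes> y"
  shows "bij_betw (\<lambda>h. h \<otimes> w \<otimes> inv h \<otimes> inv w) HH HH"
  unfolding bij_betw_def
proof
  show "inj_on (\<lambda>h. h \<otimes> w \<otimes> inv h \<otimes> inv w) HH" by (rule rho_inj[OF w])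
  have wc: "w \<in> carrier G" using w y by auto
  have "(\<lambda>h. h \<otimes> w \<otimes> inv h \<otimes> inv w) ` HH \<subseteq> HH"
  proof
    fix c assume "c \<in> (\<lambda>h. h \<otimes> w \<otimes> inv h \<otimes> inv w) ` HH"
    then obtain h where h: "h \<in> HH" "c = h \<otimes> w \<otimes> inv h \<otimes> inv w" by blast
    have "c = h \<otimes> (w \<otimes> inv h \<otimes> inv w)" using h wc HH_carr by (simp add: m_assoc)
    then show "c \<in> HH" using HH_mult[OF h(1) normal2[OF wc HH_inv[OF h(1)]]] by simp
  qed
  then show "(\<lambda>h. h \<otimes> w \<otimes> inv h \<otimes> inv w) ` HH = HH"
    using endo_inj_surj[OF finite_HH _ rho_inj[OF w]] by blast
qed

lemma conj_bij:
  assumes g: "g \<in> carrier G"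
  shows "bij_betw (\<lambda>h. inv g \<otimes> h \<otimes> g) HH HH"
  by (rule bij_betw_byWitness[where f'="\<lambda>h. g \<otimes> h \<otimes> inv g"])
     (use g HH_carr normal1 normal2 in \<open>auto simp: m_assoc\<close>)

lemma rmult_bij:
  assumes h: "h \<in> HH"
  shows "bij_betw (\<lambda>c. c \<otimes> h) HH HH"
  by (rule bij_betw_byWitness[where f'="\<lambda>c. c \<otimes> inv h"])
     (use h HH_carr HH_mult HH_inv in \<open>auto simp: m_assoc\<close>)

end

definition EEf :: "('g,'b) monoid_scheme \<Rightarrow> 'g set \<Rightarrow> 'g \<Rightarrow> 'f::field" where
  "EEf G S = (\<Sum>h\<in>S. grp_elt G h)"

definition NNf :: "('g,'b) monoid_scheme \<Rightarrow> 'g \<Rightarrow> 'g \<Rightarrow> 'f::field" where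
  "NNf G y = grp_elt G \<one>\<^bsub>G\<^esub> + grp_elt G y + grp_elt G (y \<otimes>\<^bsub>G\<^esub> y)"

definition FHs :: "'g set \<Rightarrow> ('g \<Rightarrow> 'f::field) set" where
  "FHs S = {f. \<forall>g. g \<notin> S \<longrightarrow> f g = 0}"

context T3m begin

lemma EE_apply: "EEf G HH a = (if a \<in> HH then 1 else 0)"
  by (simp add: EEf_def sum_fun_apply grp_elt_def finite_HH)

lemma EE_CR [simp]: "EEf G HH \<in> CR G"
  using HH_carr by (auto simp: CR_def EE_apply)

lemma cv_EE_left: "g \<in> carrier G \<Longrightarrow> cv G (EEf G HH) f g = (\<Sum>h\<in>HH. f (inv h \<otimes> g))"
  unfolding EEf_def cv_sum_left sum_fun_apply
  by (rule sum.cong) (auto simp: cv_elt_left HH_carr)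

lemma cv_EE_right: "g \<in> carrier G \<Longrightarrow> cv G f (EEf G HH) g = (\<Sum>h\<in>HH. f (g \<otimes> inv h))"
  unfolding EEf_def cv_sum_right sum_fun_apply
  by (rule sum.cong) (auto simp: cv_elt_right HH_carr)

lemma EE_central: "cv G (EEf G HH) f = cv G f (EEf G HH)"
proof
  fix g show "cv G (EEf G HH) f g = cv G f (EEf G HH) g"
  proof (cases "g \<in> carrier G")
    case False then show ?thesis by (simp add: cv_def)
  next
    case g: True
    have "(\<Sum>h\<in>HH. f (g \<otimes> inv h)) = (\<Sum>h\<in>HH. f (g \<otimes> inv (inv g \<otimes> h \<otimes> g)))"
      by (rule sum.reindex_bij_betw[OF conj_bij[OF g], symmetric])
    also have "\<dots> = (\<Sum>h\<in>HH. f (inv h \<otimes> g))"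
      by (rule sum.cong[OF refl]) (use g HH_carr in \<open>simp add: inv_mult_group m_assoc\<close>)
    finally show ?thesis using g by (simp add: cv_EE_left cv_EE_right)
  qed
qed

lemma cv_EE_elt: "h \<in> HH \<Longrightarrow> cv G (EEf G HH) (grp_elt G h) = EEf G HH"
proof
  fix g assume h: "h \<in> HH"
  have hc: "h \<in> carrier G" using HH_carr[OF h] .
  show "cv G (EEf G HH) (grp_elt G h) g = EEf G HH g"
  proof (cases "g \<in> carrier G")
    case True
    have "(g \<otimes> inv h \<in> HH) = (g \<in> HH)"
    proof
      assume "g \<otimes> inv h \<in> HH"
      then have "g \<otimes> inv h \<otimes> h \<in> HH" using HH_mult h by blast
      then show "g \<in> HH" using True hc by (simp add: m_assoc)
    qed (use HH_mult HH_inv h in blast)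
    then show ?thesis using True hc by (simp add: cv_elt_right EE_apply)
  next
    case False
    then have "g \<notin> HH" using HH_carr by blast
    then show ?thesis using False hc by (simp add: cv_elt_right EE_apply)
  qed
qed

lemma Delta_sub:
  "rel_aug_ideal G HH \<subseteq> {f \<in> CR G. cv G (EEf G HH) f = (0 :: 'g \<Rightarrow> 'f::field)}"
proof -
  let ?R = "group_algebra G :: ('g \<Rightarrow> 'f) ring"
  let ?S = "{f \<in> CR G. cv G (EEf G HH) f = (0 :: 'g \<Rightarrow> 'f)}"
  have sg: "subgroup ?S (add_monoid ?R)"
  proof (rule subgroup.intro)
    show "?S \<subseteq> carrier (add_monoid ?R)" by (auto simp: GA_simps)
    show "\<And>a b. a \<in> ?S \<Longrightarrow> b \<in> ?S \<Longrightarrow> a \<otimes>\<^bsub>add_monoid ?R\<^esub> b \<in> ?S"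
      by (simp add: GA_simps cv_add_right)
    show "\<one>\<^bsub>add_monoid ?R\<^esub> \<in> ?S" by (simp add: GA_simps)
    show "\<And>a. a \<in> ?S \<Longrightarrow> inv\<^bsub>add_monoid ?R\<^esub> a \<in> ?S"
    proof -
      fix a assume a: "a \<in> ?S"
      have "inv\<^bsub>add_monoid ?R\<^esub> a = - a" using GA_a_inv[of a] a by (simp add: a_inv_def)
      moreover have "cv G (EEf G HH) (- a) = 0" using a cv_diff_right[of G "EEf G HH" 0 a] by simp
      ultimately show "inv\<^bsub>add_monoid ?R\<^esub> a \<in> ?S" using a by simp
    qed
  qed
  have id: "ideal ?S ?R"
  proof (rule idealI[OF GA_ring sg])
    fix a r assume a: "a \<in> ?S" and r: "r \<in> carrier ?R"
    show "r \<otimes>\<^bsub>?R\<^esub> a \<in> ?S"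
    proof -
      have "cv G (EEf G HH) (cv G r a) = cv G (cv G (EEf G HH) r) a" by (simp add: cv_assoc)
      also have "\<dots> = cv G (cv G r (EEf G HH)) a" by (simp only: EE_central)
      also have "\<dots> = cv G r (cv G (EEf G HH) a)" by (simp add: cv_assoc)
      finally have "cv G (EEf G HH) (cv G r a) = cv G r (cv G (EEf G HH) a)" .
      then show ?thesis using a by (simp add: GA_simps)
    qed
    show "a \<otimes>\<^bsub>?R\<^esub> r \<in> ?S"
    proof -
      have "cv G (EEf G HH) (cv G a r) = cv G (cv G (EEf G HH) a) r"
        by (simp add: cv_assoc)
      then show ?thesis using a by (simp add: GA_simps)
    qed
  qed
  have gens: "{(\<lambda>g. grp_elt G h g - grp_elt G \<one> g) | h. h \<in> HH} \<subseteq> ?S"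
  proof
    fix f :: "'g \<Rightarrow> 'f" assume "f \<in> {(\<lambda>g. grp_elt G h g - grp_elt G \<one> g) | h. h \<in> HH}"
    then obtain h where h: "h \<in> HH" "f = (\<lambda>g. grp_elt G h g - grp_elt G \<one> g)" by blast
    have f: "f = grp_elt G h - grp_elt G \<one>" using h by (simp add: fun_eq_iff)
    have "cv G (EEf G HH) f = 0"
      using h(1) HH_one unfolding f by (simp add: cv_diff_right cv_EE_elt)
    moreover have "f \<in> CR G" using h(1) HH_carr HH_one unfolding f by simp
    ultimately show "f \<in> ?S" by simp
  qed
  show ?thesis unfolding rel_aug_ideal_def genideal_def using id gens by blast
qed

lemma inv_yy: "inv (y \<otimes> y) = y"
  using y by (simp add: inv_y[symmetric])

lemma NN_CR [simp]: "NNf G y \<in> CR G"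
  using y by (simp add: NNf_def)

lemma cv_NN_right: "cv G f (NNf G y) = (\<lambda>g. if g \<in> carrier G then f g + f (g \<otimes> inv y) + f (g \<otimes> y) else 0)"
  using y by (simp add: NNf_def cv_add_right cv_elt_right inv_yy fun_eq_iff)

lemma NN_y: "cv G (NNf G y) (grp_elt G y) = NNf G y"
  using y y3' by (simp add: NNf_def cv_add_left cv_elt_elt add_ac)

lemma K_formula:
  assumes m1: "(of_nat m :: 'f::field) = 1"
  shows "(\<Sum>h\<in>HH. cv G (grp_elt G h) (cv G (NNf G y) (grp_elt G (inv h))))
     = (grp_elt G \<one> + cv G (EEf G HH) (grp_elt G y) + cv G (EEf G HH) (grp_elt G (y \<otimes> y)) :: 'g \<Rightarrow> 'f)"
proof -
  have trm: "cv G (grp_elt G h) (cv G (NNf G y) (grp_elt G (inv h)))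
      = grp_elt G \<one> + grp_elt G (h \<otimes> y \<otimes> inv h) + (grp_elt G (h \<otimes> (y \<otimes> y) \<otimes> inv h) :: 'g \<Rightarrow> 'f)"
    if h: "h \<in> HH" for h
  proof -
    have hc: "h \<in> carrier G" using HH_carr[OF h] .
    show ?thesis using hc y
      by (simp add: NNf_def cv_add_left cv_add_right cv_elt_elt m_assoc)
  qed
  have rw: "(\<Sum>h\<in>HH. grp_elt G (h \<otimes> w \<otimes> inv h)) = (cv G (EEf G HH) (grp_elt G w) :: 'g \<Rightarrow> 'f)"
    if w: "w = y \<or> w = y \<otimes> y" for w
  proof -
    have wc: "w \<in> carrier G" using w y by auto
    have "(\<Sum>h\<in>HH. (grp_elt G (h \<otimes> w) :: 'g \<Rightarrow> 'f))
       = (\<Sum>h\<in>HH. grp_elt G ((h \<otimes> w \<otimes> inv h \<otimes> inv w) \<otimes> w))"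
      by (rule sum.reindex_bij_betw[OF rho_bij[OF w], symmetric])
    also have "\<dots> = (\<Sum>h\<in>HH. grp_elt G (h \<otimes> w \<otimes> inv h))"
      by (rule sum.cong[OF refl]) (use wc HH_carr in \<open>simp add: m_assoc\<close>)
    finally have "(\<Sum>h\<in>HH. grp_elt G (h \<otimes> w \<otimes> inv h)) = (\<Sum>h\<in>HH. (grp_elt G (h \<otimes> w) :: 'g \<Rightarrow> 'f))" by simp
    also have "\<dots> = cv G (EEf G HH) (grp_elt G w)"
      unfolding EEf_def cv_sum_left by (rule sum.cong[OF refl]) (use wc HH_carr in \<open>simp add: cv_elt_elt\<close>)
    finally show ?thesis .
  qed
  have one: "(\<Sum>h\<in>HH. (grp_elt G \<one> :: 'g \<Rightarrow> 'f)) = grp_elt G \<one>"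
    by (simp add: fun_eq_iff sum_fun_apply card_HH m1)
  have "(\<Sum>h\<in>HH. cv G (grp_elt G h) (cv G (NNf G y) (grp_elt G (inv h))))
      = (\<Sum>h\<in>HH. grp_elt G \<one> + grp_elt G (h \<otimes> y \<otimes> inv h) + (grp_elt G (h \<otimes> (y \<otimes> y) \<otimes> inv h) :: 'g \<Rightarrow> 'f))"
    by (rule sum.cong[OF refl]) (rule trm)
  also have "\<dots> = (\<Sum>h\<in>HH. (grp_elt G \<one> :: 'g \<Rightarrow> 'f)) + (\<Sum>h\<in>HH. grp_elt G (h \<otimes> y \<otimes> inv h))
       + (\<Sum>h\<in>HH. grp_elt G (h \<otimes> (y \<otimes> y) \<otimes> inv h))"
    by (simp add: sum.distrib)
  also have "\<dots> = grp_elt G \<one> + cv G (EEf G HH) (grp_elt G y) + cv G (EEf G HH) (grp_elt G (y \<otimes> y))"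
    by (simp only: one rw[OF disjI1[OF refl]] rw[OF disjI2[OF refl]])
  finally show ?thesis .
qed

end

definition smf :: "'f::field \<Rightarrow> ('g \<Rightarrow> 'f) \<Rightarrow> 'g \<Rightarrow> 'f" where
  "smf c f = (\<lambda>g. c * f g)"

context T3m begin

lemma K_left:
  assumes m1: "(of_nat m :: 'f::field) = 1" and v: "v \<in> CR G" and ev: "cv G (EEf G HH) v = (0 :: 'g \<Rightarrow> 'f)"
  shows "cv G (\<Sum>h\<in>HH. cv G (grp_elt G h) (cv G (NNf G y) (grp_elt G (inv h)))) v = v"
proof -
  have z: "cv G (cv G (EEf G HH) (grp_elt G w)) v = 0" for w
  proof -
    have "cv G (cv G (EEf G HH) (grp_elt G w)) v = cv G (cv G (grp_elt G w) (EEf G HH)) v"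
      by (simp only: EE_central)
    also have "\<dots> = cv G (grp_elt G w) (cv G (EEf G HH) v)" by (simp add: cv_assoc)
    finally show ?thesis using ev by simp
  qed
  show ?thesis using v y by (simp add: K_formula[OF m1] cv_add_left z)
qed

lemma K_right:
  assumes m1: "(of_nat m :: 'f::field) = 1" and v: "v \<in> CR G" and ev: "cv G (EEf G HH) v = (0 :: 'g \<Rightarrow> 'f)"
  shows "cv G v (\<Sum>h\<in>HH. cv G (grp_elt G h) (cv G (NNf G y) (grp_elt G (inv h)))) = v"
proof -
  have z: "cv G v (cv G (EEf G HH) (grp_elt G w)) = 0" for w
  proof -
    have "cv G v (cv G (EEf G HH) (grp_elt G w)) = cv G (cv G v (EEf G HH)) (grp_elt G w)"
      by (simp add: cv_assoc)
    also have "\<dots> = cv G (cv G (EEf G HH) v) (grp_elt G w)" by (simp only: EE_central)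
    finally show ?thesis using ev by simp
  qed
  show ?thesis using v y by (simp add: K_formula[OF m1] cv_add_right z)
qed

lemma FH_CR: "f \<in> FHs HH \<Longrightarrow> f \<in> CR G"
  using HH_carr by (auto simp: FHs_def CR_def)

lemma elt_FH: "h \<in> HH \<Longrightarrow> grp_elt G h \<in> FHs HH"
  by (auto simp: FHs_def grp_elt_def)

lemma FH_add: "f \<in> FHs HH \<Longrightarrow> h \<in> FHs HH \<Longrightarrow> f + h \<in> FHs HH"
  by (auto simp: FHs_def)

lemma FH_smf: "f \<in> FHs HH \<Longrightarrow> smf c f \<in> FHs HH"
  by (auto simp: FHs_def smf_def)

lemma FH_zero: "0 \<in> FHs HH"
  by (auto simp: FHs_def)

lemma FH_sum: "(\<And>i. i \<in> I \<Longrightarrow> f i \<in> FHs HH) \<Longrightarrow> (\<Sum>i\<in>I. f i) \<in> FHs HH"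
proof (induction I rule: infinite_finite_induct)
  case (insert a F)
  have "f a + sum f F \<in> FHs HH" by (rule FH_add) (use insert in auto)
  then show ?case by (simp only: sum.insert[OF insert(1,2)])
qed (simp_all add: FH_zero)

lemma FH_cv: "f \<in> FHs HH \<Longrightarrow> h \<in> FHs HH \<Longrightarrow> cv G f h \<in> FHs HH"
proof -
  assume f: "f \<in> FHs HH" and h: "h \<in> FHs HH"
  show ?thesis unfolding FHs_def
  proof (intro CollectI allI impI)
    fix g assume g: "g \<notin> HH"
    show "cv G f h g = 0"
    proof (cases "g \<in> carrier G")
      case True
      have "f a * h (inv a \<otimes> g) = 0" if a: "a \<in> carrier G" for a
      proof (cases "a \<in> HH \<and> inv a \<otimes> g \<in> HH")
        case True
        then have "a \<otimes> (inv a \<otimes> g) \<in> HH" using HH_mult by blast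
        then show ?thesis using g a \<open>g \<in> carrier G\<close> by simp
      next
        case False then show ?thesis using f h by (auto simp: FHs_def)
      qed
      then show ?thesis using True unfolding cv_def by (simp add: sum.neutral)
    qed (simp add: cv_def)
  qed
qed

lemma FH_one: "grp_elt G \<one> \<in> FHs HH"
  by (rule elt_FH[OF HH_one])

lemma pw_FH: "f \<in> FHs HH \<Longrightarrow> pw G f n \<in> FHs HH"
  by (induction n) (auto simp: FH_one FH_cv)

lemma FH_comm:
  assumes f: "f \<in> FHs HH" and h: "h \<in> FHs HH"
  shows "cv G f h = cv G h f"
proof
  fix g show "cv G f h g = cv G h f g"
  proof (cases "g \<in> carrier G")
    case False then show ?thesis by (simp add: cv_def)
  next
    case g: True
    have bij: "bij_betw (\<lambda>b. g \<otimes> inv b) (carrier G) (carrier G)"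
      by (rule bij_betw_byWitness[where f'="\<lambda>a. inv a \<otimes> g"])
         (use g in \<open>auto simp: inv_mult_group m_assoc\<close>)
    have "(\<Sum>a\<in>carrier G. h a * f (inv a \<otimes> g)) = (\<Sum>b\<in>carrier G. h (g \<otimes> inv b) * f (inv (g \<otimes> inv b) \<otimes> g))"
      by (rule sum.reindex_bij_betw[OF bij, symmetric])
    also have "\<dots> = (\<Sum>b\<in>carrier G. f b * h (inv b \<otimes> g))"
    proof (rule sum.cong[OF refl])
      fix b assume b: "b \<in> carrier G"
      have e1: "inv (g \<otimes> inv b) \<otimes> g = b" using g b by (simp add: inv_mult_group m_assoc)
      have "h (g \<otimes> inv b) = h (inv b \<otimes> g)" if bH: "b \<in> HH"
      proof (cases "g \<in> HH")
        case True then show ?thesis using HH_comm HH_inv bH by metis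
      next
        case False
        have "g \<otimes> inv b \<notin> HH"
        proof
          assume "g \<otimes> inv b \<in> HH" then have "g \<otimes> inv b \<otimes> b \<in> HH" using HH_mult bH by blast
          then show False using False g b by (simp add: m_assoc)
        qed
        moreover have "inv b \<otimes> g \<notin> HH"
        proof
          assume "inv b \<otimes> g \<in> HH" then have "b \<otimes> (inv b \<otimes> g) \<in> HH" using HH_mult bH by blast
          then show False using False g b by simp
        qed
        ultimately show ?thesis using h by (simp add: FHs_def)
      qed
      moreover have "f b = 0" if "b \<notin> HH" using f that by (simp add: FHs_def)
      ultimately show "h (g \<otimes> inv b) * f (inv (g \<otimes> inv b) \<otimes> g) = f b * h (inv b \<otimes> g)"
        by (cases "b \<in> HH") (auto simp: e1)
    qed
    finally show ?thesis using g by (simp add: cv_def)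
  qed
qed

lemma restrict_NN:
  assumes P: "P \<in> CR G" and Py: "cv G P (grp_elt G y) = P"
  shows "cv G (\<lambda>g. if g \<in> HH then P g else 0) (NNf G y) = P"
proof
  fix g
  have P1: "P (a \<otimes> inv y) = P a" if a: "a \<in> carrier G" for a
    using fun_cong[OF Py, of a] a y by (simp add: cv_elt_right)
  show "cv G (\<lambda>g. if g \<in> HH then P g else 0) (NNf G y) g = P g"
  proof (cases "g \<in> carrier G")
    case False then show ?thesis using P by (simp add: cv_NN_right CR_def)
  next
    case g: True
    have a1: "P (g \<otimes> inv y) = P g" by (rule P1[OF g])
    have a2: "P (g \<otimes> y) = P g" using P1[of "g \<otimes> y"] g y by (simp add: m_assoc)
    show ?thesis using one_of3[OF g] g a1 a2 by (auto simp: cv_NN_right)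
  qed
qed

lemma FH_NN_zero:
  assumes nu: "\<nu> \<in> FHs HH" and z: "cv G \<nu> (NNf G y) = 0"
  shows "\<nu> = 0"
proof
  fix g show "\<nu> g = 0 g"
  proof (cases "g \<in> HH")
    case True
    then have g: "g \<in> carrier G" using HH_carr by blast
    have "\<nu> g + \<nu> (g \<otimes> inv y) + \<nu> (g \<otimes> y) = 0" using fun_cong[OF z, of g] g by (simp add: cv_NN_right)
    then show ?thesis using one_of3[OF g] True nu by (auto simp: FHs_def)
  next
    case False then show ?thesis using nu by (simp add: FHs_def)
  qed
qed

end

context T3m begin

lemma cube_add:
  assumes c3: "(3 :: 'f::field) = 0" and f: "f \<in> FHs HH" and h: "(h :: 'g \<Rightarrow> 'f) \<in> FHs HH"
  shows "cv G (f + h) (cv G (f + h) (f + h)) = cv G f (cv G f f) + cv G h (cv G h h)"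
proof -
  let ?A = "cv G f (cv G f h)" and ?B = "cv G f (cv G h h)"
  have hf: "cv G h f = cv G f h" using FH_comm[OF h f] .
  have e1: "cv G f (cv G h f) = ?A" by (simp only: hf)
  have e2: "cv G h (cv G f f) = ?A"
  proof -
    have "cv G h (cv G f f) = cv G (cv G h f) f" by (simp add: cv_assoc)
    also have "\<dots> = cv G (cv G f h) f" by (simp only: hf)
    also have "\<dots> = cv G f (cv G h f)" by (simp add: cv_assoc)
    finally show ?thesis by (simp only: hf)
  qed
  have e3: "cv G h (cv G f h) = cv G h (cv G h f)" by (simp only: hf)
  have e4: "cv G h (cv G h f) = ?B"
  proof -
    have "cv G h (cv G h f) = cv G (cv G h h) f" by (simp add: cv_assoc)
    also have "\<dots> = cv G f (cv G h h)" using FH_comm[OF FH_cv[OF h h] f] by simp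
    finally show ?thesis .
  qed
  have "cv G (f + h) (cv G (f + h) (f + h)) =
     cv G f (cv G f f) + ?A + cv G f (cv G h f) + ?B + cv G h (cv G f f) + cv G h (cv G f h)
     + cv G h (cv G h f) + cv G h (cv G h h)"
    by (simp add: cv_add_left cv_add_right add_ac)
  also have "\<dots> = cv G f (cv G f f) + ?A + ?A + ?B + ?A + ?B + ?B + cv G h (cv G h h)"
    by (simp only: e1 e2 e3 e4)
  also have "\<dots> = cv G f (cv G f f) + cv G h (cv G h h)"
  proof
    fix g
    have "(cv G f (cv G f f) + ?A + ?A + ?B + ?A + ?B + ?B + cv G h (cv G h h)) g
        = cv G f (cv G f f) g + cv G h (cv G h h) g + 3 * ?A g + 3 * ?B g"
      by (simp add: algebra_simps)
    then show "(cv G f (cv G f f) + ?A + ?A + ?B + ?A + ?B + ?B + cv G h (cv G h h)) g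
        = (cv G f (cv G f f) + cv G h (cv G h h)) g" using c3 by simp
  qed
  finally show ?thesis .
qed

lemma cv_smf_left: "cv G (smf c f) h = smf c (cv G f h)"
  by (simp add: cv_def smf_def fun_eq_iff sum_distrib_left mult.assoc)

lemma cv_smf_right: "cv G f (smf c h) = smf c (cv G f h)"
  by (simp add: cv_def smf_def fun_eq_iff sum_distrib_left mult_ac)

lemma cube_term: "a \<in> HH \<Longrightarrow> cv G (smf c (grp_elt G a)) (cv G (smf c (grp_elt G a)) (smf c (grp_elt G a)))
   = smf (c ^ 3) (grp_elt G (a \<otimes> (a \<otimes> a)))"
  using HH_carr[of a] by (simp add: cv_smf_left cv_smf_right cv_elt_elt) (simp add: smf_def power3_eq_cube mult_ac)

lemma cube_sum:
  assumes c3: "(3 :: 'f::field) = 0"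
  shows "finite S \<Longrightarrow> S \<subseteq> HH \<Longrightarrow>
    cv G (\<Sum>a\<in>S. smf (c a) (grp_elt G a)) (cv G (\<Sum>a\<in>S. smf (c a) (grp_elt G a)) (\<Sum>a\<in>S. smf (c a) (grp_elt G a)))
    = (\<Sum>a\<in>S. smf ((c a :: 'f) ^ 3) (grp_elt G (a \<otimes> (a \<otimes> a))))"
proof (induction S rule: finite_induct)
  case empty then show ?case by (simp add: cv_def fun_eq_iff)
next
  case (insert b F)
  let ?s = "\<Sum>a\<in>F. smf (c a) (grp_elt G a)"
  have sF: "?s \<in> FHs HH" using insert by (intro FH_sum FH_smf elt_FH) auto
  have tb: "smf (c b) (grp_elt G b) \<in> FHs HH" using insert by (intro FH_smf elt_FH) auto
  have "(\<Sum>a\<in>insert b F. smf (c a) (grp_elt G a)) = smf (c b) (grp_elt G b) + ?s"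
    by (rule sum.insert[OF insert(1,2)])
  moreover have "(\<Sum>a\<in>insert b F. smf (c a ^ 3) (grp_elt G (a \<otimes> (a \<otimes> a))))
     = smf (c b ^ 3) (grp_elt G (b \<otimes> (b \<otimes> b))) + (\<Sum>a\<in>F. smf (c a ^ 3) (grp_elt G (a \<otimes> (a \<otimes> a))))"
    by (rule sum.insert[OF insert(1,2)])
  note ins1 = \<open>(\<Sum>a\<in>insert b F. smf (c a) (grp_elt G a)) = smf (c b) (grp_elt G b) + ?s\<close>
  note ins2 = \<open>(\<Sum>a\<in>insert b F. smf (c a ^ 3) (grp_elt G (a \<otimes> (a \<otimes> a))))
     = smf (c b ^ 3) (grp_elt G (b \<otimes> (b \<otimes> b))) + (\<Sum>a\<in>F. smf (c a ^ 3) (grp_elt G (a \<otimes> (a \<otimes> a))))\<close>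
  have IH: "cv G ?s (cv G ?s ?s) = (\<Sum>a\<in>F. smf (c a ^ 3) (grp_elt G (a \<otimes> (a \<otimes> a))))"
    using insert by blast
  have bH: "b \<in> HH" using insert by blast
  show ?case
    by (simp only: ins1 ins2 cube_add[OF c3 tb sF] cube_term[OF bH] IH)
qed

lemma FH_expand: "f \<in> FHs HH \<Longrightarrow> (\<Sum>a\<in>HH. smf (f a) (grp_elt G a)) = f"
  by (auto simp: fun_eq_iff sum_fun_apply smf_def grp_elt_def finite_HH FHs_def
      if_distrib[where f="\<lambda>x. _ * x"] cong: if_cong)

lemma cube3: "a \<in> carrier G \<Longrightarrow> a \<otimes> (a \<otimes> a) = a [^] (3::nat)"
  by (simp add: numeral_3_eq_3 m_assoc)

lemma cube_inj: "a \<in> HH \<Longrightarrow> b \<in> HH \<Longrightarrow> a \<otimes> (a \<otimes> a) = b \<otimes> (b \<otimes> b) \<Longrightarrow> a = b"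
proof -
  assume a: "a \<in> HH" and b: "b \<in> HH" and eq: "a \<otimes> (a \<otimes> a) = b \<otimes> (b \<otimes> b)"
  have ac: "a \<in> carrier G" and bc: "b \<in> carrier G" using a b HH_carr by auto
  let ?c = "a \<otimes> inv b"
  have cH: "?c \<in> HH" using HH_mult[OF a HH_inv[OF b]] .
  have "?c [^] (3::nat) = a [^] (3::nat) \<otimes> inv b [^] (3::nat)"
    using ac bc by (intro pow_mult_distrib HH_comm a HH_inv b) auto
  also have "\<dots> = \<one>" using eq ac bc by (simp add: cube3 nat_pow_inv)
  finally have c3: "?c [^] (3::nat) = \<one>" .
  have cc: "?c \<in> carrier G" using ac bc by simp
  have "?c [^] m = ?c [^] (3 * k) \<otimes> ?c [^] (1::nat)" using cc by (simp add: mk nat_pow_mult)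
  also have "\<dots> = ?c" using cc by (simp add: nat_pow_pow[symmetric] c3)
  finally have "?c = \<one>" using HH_pow_m[OF cH] by simp
  then show "a = b" using ac bc by (metis inv_equality inv_inv inv_closed)
qed

lemma cube_zero:
  assumes c3: "(3 :: 'f::field) = 0" and f: "(f :: 'g \<Rightarrow> 'f) \<in> FHs HH" and z: "cv G f (cv G f f) = 0"
  shows "f = 0"
proof
  fix b
  have e: "(\<Sum>a\<in>HH. smf ((f a) ^ 3) (grp_elt G (a \<otimes> (a \<otimes> a)))) = 0"
    using cube_sum[OF c3 finite_HH subset_refl, of f] FH_expand[OF f] z by simp
  show "f b = 0 b"
  proof (cases "b \<in> HH")
    case True
    have "(\<Sum>a\<in>HH. smf ((f a) ^ 3) (grp_elt G (a \<otimes> (a \<otimes> a)))) (b \<otimes> (b \<otimes> b))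
        = (\<Sum>a\<in>HH. if a = b then (f a) ^ 3 else 0)"
      unfolding sum_fun_apply
      by (rule sum.cong[OF refl]) (use True cube_inj in \<open>auto simp: smf_def grp_elt_def\<close>)
    also have "\<dots> = f b ^ 3" using True finite_HH by simp
    finally have "f b ^ 3 = 0" using e by simp
    then show ?thesis by simp
  next
    case False then show ?thesis using f by (simp add: FHs_def)
  qed
qed

lemma reduced:
  assumes c3: "(3 :: 'f::field) = 0" and f: "(f :: 'g \<Rightarrow> 'f) \<in> FHs HH" and n: "pw G f n = 0"
  shows "f = 0"
proof -
  have fC: "f \<in> CR G" using FH_CR[OF f] .
  have n3: "n \<le> 3 ^ n"
  proof -
    have "n < 2 ^ n" by (rule less_exp)
    also have "(2::nat) ^ n \<le> 3 ^ n" by (rule power_mono) auto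
    finally show ?thesis by simp
  qed
  have "pw G f (3 ^ n) = 0"
  proof -
    obtain r where r: "3 ^ n = n + r" using n3 le_Suc_ex by blast
    have "pw G f (3 ^ n) = cv G (pw G f n) (pw G f r)" by (simp only: r pw_add[OF fC])
    then show ?thesis using n by simp
  qed
  moreover have "\<forall>f :: 'g \<Rightarrow> 'f. f \<in> FHs HH \<longrightarrow> pw G f (3 ^ j) = 0 \<longrightarrow> f = 0" for j
  proof (induction j)
    case 0 show ?case
    proof (intro allI impI)
      fix f :: "'g \<Rightarrow> 'f" assume "f \<in> FHs HH" "pw G f (3 ^ 0) = 0"
      then show "f = 0" using FH_CR[of f] by simp
    qed
  next
    case (Suc j)
    show ?case
    proof (intro allI impI)
      fix f :: "'g \<Rightarrow> 'f" assume f: "f \<in> FHs HH" and z: "pw G f (3 ^ Suc j) = 0"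
      have fC: "f \<in> CR G" using FH_CR[OF f] .
      have "pw G (pw G f 3) (3 ^ j) = 0" using z fC by (simp add: pw_mult[symmetric])
      then have "pw G f 3 = 0" using Suc pw_FH[OF f] by blast
      moreover have "pw G f 3 = cv G f (cv G f f)" using fC by (simp add: numeral_3_eq_3 cv_assoc)
      ultimately show "f = 0" using cube_zero[OF c3 f] by simp
    qed
  qed
  ultimately show ?thesis using f by blast
qed

end

context T3m begin

lemma main_T3m:
  fixes z :: "'g \<Rightarrow> 'f::{field,finite}"
  assumes c3: "(3::'f) = 0" and m1: "(of_nat m :: 'f) = 1"
    and zJ: "z \<in> jacobson_radical (group_algebra G :: ('g \<Rightarrow> 'f) ring)"
    and zD: "z \<in> rel_aug_ideal G HH"
  shows "z = 0"
proof -
  let ?R = "group_algebra G :: ('g \<Rightarrow> 'f) ring"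
  let ?N = "NNf G y :: 'g \<Rightarrow> 'f"
  let ?E = "EEf G HH :: 'g \<Rightarrow> 'f"
  have zC: "z \<in> CR G" and zE: "cv G ?E z = 0" using zD Delta_sub by auto
  have nil: "\<exists>n. pw G (cv G r z) n = 0" if r: "r \<in> CR G" for r
  proof -
    have "cv G r z \<in> jacobson_radical ?R"
      unfolding jacobson_radical_def
    proof (intro IntI InterI)
      show "cv G r z \<in> carrier ?R" by (simp add: GA_simps)
      fix M assume "M \<in> {I. maximal_left_ideal ?R I}"
      then have M: "maximal_left_ideal ?R M" by simp
      then have LM: "left_ideal ?R M" by (simp add: maximal_left_ideal_def)
      have "z \<in> M" using zJ M by (auto simp: jacobson_radical_def)
      then show "cv G r z \<in> M" by (rule left_ideal_mult[OF LM r])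
    qed
    then show ?thesis by (rule jac_nil)
  qed
  have stepA: "cv G ?N (cv G (grp_elt G h1) (cv G z (cv G (grp_elt G h0) ?N))) = 0"
    if h0: "h0 \<in> HH" and h1: "h1 \<in> HH" for h0 h1
  proof -
    have h0c: "h0 \<in> carrier G" and h1c: "h1 \<in> carrier G" using h0 h1 HH_carr by auto
    define P where "P = cv G ?N (cv G (grp_elt G h1) (cv G z (cv G (grp_elt G h0) ?N)))"
    have PC: "P \<in> CR G" by (simp add: P_def)
    have Py: "cv G P (grp_elt G y) = P"
      unfolding P_def by (simp add: cv_assoc NN_y)
    define lam where "lam = (\<lambda>g. if g \<in> HH then P g else (0::'f))"
    have lamFH: "lam \<in> FHs HH" by (simp add: lam_def FHs_def)
    have Peq: "cv G lam ?N = P" unfolding lam_def by (rule restrict_NN[OF PC Py])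
    have eq': "cv G ?N (cv G (grp_elt G h1) (cv G z (cv G (grp_elt G h0) (cv G ?N X)))) = cv G lam (cv G ?N X)" for X
    proof -
      have "cv G ?N (cv G (grp_elt G h1) (cv G z (cv G (grp_elt G h0) (cv G ?N X)))) = cv G P X"
        unfolding P_def by (simp add: cv_assoc)
      also have "\<dots> = cv G lam (cv G ?N X)" by (simp add: Peq[symmetric] cv_assoc)
      finally show ?thesis .
    qed
    have comm: "cv G (grp_elt G h0) lam = cv G lam (grp_elt G h0)"
      by (rule FH_comm[OF elt_FH[OF h0] lamFH])
    define u where "u = cv G (grp_elt G h0) (cv G ?N (cv G (grp_elt G h1) z))"
    have uC: "u \<in> CR G" by (simp add: u_def)
    have ur: "u = cv G (cv G (grp_elt G h0) (cv G ?N (grp_elt G h1))) z"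
      by (simp add: u_def cv_assoc)
    have uu: "cv G u u = cv G lam u"
    proof -
      have "cv G u u = cv G (grp_elt G h0) (cv G ?N (cv G (grp_elt G h1) (cv G z
              (cv G (grp_elt G h0) (cv G ?N (cv G (grp_elt G h1) z))))))"
        by (simp add: u_def cv_assoc)
      also have "\<dots> = cv G (grp_elt G h0) (cv G lam (cv G ?N (cv G (grp_elt G h1) z)))"
        by (simp only: eq')
      also have "\<dots> = cv G (cv G (grp_elt G h0) lam) (cv G ?N (cv G (grp_elt G h1) z))"
        by (simp add: cv_assoc)
      also have "\<dots> = cv G (cv G lam (grp_elt G h0)) (cv G ?N (cv G (grp_elt G h1) z))"
        by (simp only: comm)
      also have "\<dots> = cv G lam u" by (simp add: u_def cv_assoc)
      finally show ?thesis .
    qed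
    have pwu: "pw G u (Suc n) = cv G (pw G lam n) u" for n
    proof (induction n)
      case 0 show ?case using uC by simp
    next
      case (Suc n)
      have "pw G u (Suc (Suc n)) = cv G (cv G (pw G lam n) u) u" using Suc by simp
      also have "\<dots> = cv G (pw G lam n) (cv G lam u)" by (simp add: cv_assoc uu)
      also have "\<dots> = cv G (pw G lam (Suc n)) u" by (simp add: cv_assoc)
      finally show ?case .
    qed
    obtain n where n: "pw G u n = 0" using nil[of "cv G (grp_elt G h0) (cv G ?N (grp_elt G h1))"] ur by auto
    have "n \<noteq> 0"
    proof
      assume "n = 0"
      then have "(grp_elt G \<one> :: 'g \<Rightarrow> 'f) = 0" using n by simp
      then have "(grp_elt G \<one> :: 'g \<Rightarrow> 'f) \<one> = 0" by simp
      then show False by (simp add: grp_elt_def)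
    qed
    then obtain n' where n': "n = Suc n'" by (cases n) auto
    have z1: "cv G (pw G lam n') u = 0" using n pwu[of n'] n' by simp
    have uh: "cv G u (cv G (grp_elt G h0) ?N) = cv G lam (cv G (grp_elt G h0) ?N)"
    proof -
      have "cv G u (cv G (grp_elt G h0) ?N) = cv G (grp_elt G h0) P"
        by (simp add: u_def P_def cv_assoc)
      also have "\<dots> = cv G (cv G (grp_elt G h0) lam) ?N" by (simp add: Peq[symmetric] cv_assoc)
      also have "\<dots> = cv G (cv G lam (grp_elt G h0)) ?N" by (simp only: comm)
      finally show ?thesis by (simp add: cv_assoc)
    qed
    define mu where "mu = pw G lam (Suc n')"
    have muFH: "mu \<in> FHs HH" unfolding mu_def by (rule pw_FH[OF lamFH])
    have "0 = cv G (cv G (pw G lam n') u) (cv G (grp_elt G h0) ?N)" using z1 by simp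
    also have "\<dots> = cv G (pw G lam n') (cv G lam (cv G (grp_elt G h0) ?N))" by (simp add: cv_assoc uh)
    also have "\<dots> = cv G (cv G mu (grp_elt G h0)) ?N" by (simp add: mu_def cv_assoc)
    finally have "cv G (cv G mu (grp_elt G h0)) ?N = 0" by simp
    then have "cv G mu (grp_elt G h0) = 0"
      by (rule FH_NN_zero[OF FH_cv[OF muFH elt_FH[OF h0]]])
    then have "cv G (cv G mu (grp_elt G h0)) (grp_elt G (inv h0)) = 0" by simp
    then have "mu = 0" using h0c FH_CR[OF muFH] by (simp add: cv_assoc cv_elt_elt)
    then have "lam = 0" unfolding mu_def by (rule reduced[OF c3 lamFH])
    then show ?thesis using Peq by (simp add: P_def)
  qed
  have stepB: "cv G z (cv G (grp_elt G h0) ?N) = 0" if h0: "h0 \<in> HH" for h0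
  proof -
    define w where "w = cv G z (cv G (grp_elt G h0) ?N)"
    have wC: "w \<in> CR G" by (simp add: w_def)
    have wE: "cv G ?E w = 0" unfolding w_def by (simp add: cv_assoc[symmetric] zE)
    have "w = cv G (\<Sum>h\<in>HH. cv G (grp_elt G h) (cv G ?N (grp_elt G (inv h)))) w"
      by (rule K_left[OF m1 wC wE, symmetric])
    also have "\<dots> = (\<Sum>h\<in>HH. cv G (grp_elt G h) (cv G ?N (cv G (grp_elt G (inv h)) w)))"
      by (simp add: cv_sum_left cv_assoc)
    also have "\<dots> = (\<Sum>h\<in>HH. 0)"
      by (rule sum.cong[OF refl]) (simp add: w_def stepA[OF h0] HH_inv)
    finally show ?thesis by (simp add: w_def)
  qed
  have "z = cv G z (\<Sum>h\<in>HH. cv G (grp_elt G h) (cv G ?N (grp_elt G (inv h))))"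
    by (rule K_right[OF m1 zC zE, symmetric])
  also have "\<dots> = (\<Sum>h\<in>HH. cv G (cv G z (cv G (grp_elt G h) ?N)) (grp_elt G (inv h)))"
    by (simp add: cv_sum_right cv_assoc)
  also have "\<dots> = (\<Sum>h\<in>HH. 0)"
    by (rule sum.cong[OF refl]) (simp add: stepB)
  finally show ?thesis by simp
qed

end


theorem proposition3p8:
  fixes G :: "('g, 'b) monoid_scheme" and x y :: 'g and k m :: nat and t :: int
  assumes "CHAR('f::{finite,field}) = 3"
    and "m = 3 * k + 1"
    and "t ^ 3 mod int m = 1 mod int m"
    and "gcd (int m) (t - 1) = 1"
    and "group G"
    and "x \<in> carrier G" and "y \<in> carrier G"
    and "generate G {x, y} = carrier G"
    and "x [^]\<^bsub>G\<^esub> m = \<one>\<^bsub>G\<^esub>"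
    and "y [^]\<^bsub>G\<^esub> (3::nat) = \<one>\<^bsub>G\<^esub>"
    and "inv\<^bsub>G\<^esub> y \<otimes>\<^bsub>G\<^esub> x \<otimes>\<^bsub>G\<^esub> y = x [^]\<^bsub>G\<^esub> t"
    and "order G = 3 * m"
  shows "jacobson_radical (group_algebra G :: ('g \<Rightarrow> 'f) ring)
           \<inter> (rel_aug_ideal G (generate G {x}) :: ('g \<Rightarrow> 'f) set)
         = {\<zero>\<^bsub>(group_algebra G :: ('g \<Rightarrow> 'f) ring)\<^esub>}"
proof -
  have fin: "finite (carrier G)"
  proof (rule ccontr)
    assume "infinite (carrier G)"
    then have "order G = 0" by (simp add: order_def)
    then show False using assms(2,12) by simp
  qed
  interpret T: T3m G x y m k t
  proof (rule T3m.intro)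
    show "fgrp G" by (rule fgrp.intro[OF assms(5) fgrp_axioms.intro[OF fin]])
    show "T3m_axioms G x y m k t"
      by (rule T3m_axioms.intro) (rule assms)+
  qed
  have c3: "(3::'f) = 0" using of_nat_CHAR[where 'a='f] assms(1) by simp
  have m1: "(of_nat m :: 'f) = 1" using c3 assms(2) by simp
  let ?R = "group_algebra G :: ('g \<Rightarrow> 'f) ring"
  show ?thesis
  proof
    show "jacobson_radical ?R \<inter> rel_aug_ideal G (generate G {x}) \<subseteq> {\<zero>\<^bsub>?R\<^esub>}"
    proof
      fix z assume z: "z \<in> jacobson_radical ?R \<inter> (rel_aug_ideal G (generate G {x}) :: ('g \<Rightarrow> 'f) set)"
      then have "z = 0" using T.main_T3m[OF c3 m1] by (simp add: T.HH_def)
      then show "z \<in> {\<zero>\<^bsub>?R\<^esub>}" by (simp add: GA_simps)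
    qed
    have "\<zero>\<^bsub>?R\<^esub> \<in> jacobson_radical ?R"
      unfolding jacobson_radical_def
    proof (intro IntI InterI)
      show "\<zero>\<^bsub>?R\<^esub> \<in> carrier ?R" by (simp add: GA_simps)
      fix M assume "M \<in> {I. maximal_left_ideal ?R I}"
      then have "additive_subgroup M ?R" by (simp add: maximal_left_ideal_def left_ideal_def)
      then show "\<zero>\<^bsub>?R\<^esub> \<in> M" by (rule additive_subgroup.zero_closed)
    qed
    moreover have "\<zero>\<^bsub>?R\<^esub> \<in> rel_aug_ideal G (generate G {x})"
      unfolding rel_aug_ideal_def genideal_def
    proof (rule InterI)
      fix I assume "I \<in> {I. ideal I ?R \<and> {(\<lambda>g. grp_elt G h g - grp_elt G \<one>\<^bsub>G\<^esub> g) |h. h \<in> generate G {x}} \<subseteq> I}"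
      then have "additive_subgroup I ?R" by (simp add: ideal_def)
      then show "\<zero>\<^bsub>?R\<^esub> \<in> I" by (rule additive_subgroup.zero_closed)
    qed
    ultimately show "{\<zero>\<^bsub>?R\<^esub>} \<subseteq> jacobson_radical ?R \<inter> rel_aug_ideal G (generate G {x})" by blast
  qed
qed

end
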